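(* Let $k$ be a field, $x$ an indeterminate, and $R=k[x, x^{2/3^n} : n\ge 1]$, i.e. the monoid algebra over $k$ of the additive monoid $M\subseteq\mathbb{Q}_{\ge0}$ generated by $1$ and $2/3^n$ for all $n\ge1$. Then $1$ is the unique atom of $M$ (every $2/3^n$ is a sum of other nonzero elements of $M$); consequently $x$ is irreducible in $R$, while $x^{2/3}$ is not a product of irreducible elements of $R$. In particular, since $x\cdot x = (x^{2/3})^3$, the set of non-atomic nonzero nonunits of $R$ is not multiplicatively closed.
   Context: An atom of a commutative monoid $M$ (written additively, with no nonzero units) is a nonzero element not expressible as a sum of two nonzero elements. An element of an integral domain is atomic if it is a finite product of irreducible elements. *)

theory Defs
  imports Complex_Main "HOL-Library.Poly_Mapping"
begin

definition gens :: "rat set" where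
  "gens = {1} \<union> {2 / 3 ^ n | n. n \<ge> (1::nat)}"

inductive_set M :: "rat set" where
  zero: "0 \<in> M"
| gen: "g \<in> gens \<Longrightarrow> g \<in> M"
| add: "a \<in> M \<Longrightarrow> b \<in> M \<Longrightarrow> a + b \<in> M"

definition atom_of :: "'a::monoid_add set \<Rightarrow> 'a \<Rightarrow> bool" where
  "atom_of S a \<longleftrightarrow> a \<in> S \<and> a \<noteq> 0 \<and>
     \<not> (\<exists>b\<in>S. \<exists>c\<in>S. b \<noteq> 0 \<and> c \<noteq> 0 \<and> a = b + c)"

text \<open>The monoid algebra R = k[M], realised inside the ring of finitely supported
  functions from rat to k (the monoid algebra of (rat,+)) as those with support in M.\<close>
definition R :: "(rat \<Rightarrow>\<^sub>0 'k::field) set" where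
  "R = {f. Poly_Mapping.keys f \<subseteq> M}"

definition xpow :: "rat \<Rightarrow> (rat \<Rightarrow>\<^sub>0 'k::field)" where
  "xpow q = Poly_Mapping.single q 1"

definition unit_in :: "'a::comm_ring_1 set \<Rightarrow> 'a \<Rightarrow> bool" where
  "unit_in A u \<longleftrightarrow> u \<in> A \<and> (\<exists>v\<in>A. u * v = 1)"

definition irreducible_in :: "'a::comm_ring_1 set \<Rightarrow> 'a \<Rightarrow> bool" where
  "irreducible_in A p \<longleftrightarrow> p \<in> A \<and> p \<noteq> 0 \<and> \<not> unit_in A p \<and>
     (\<forall>a\<in>A. \<forall>b\<in>A. p = a * b \<longrightarrow> unit_in A a \<or> unit_in A b)"

definition atomic_in :: "'a::comm_ring_1 set \<Rightarrow> 'a \<Rightarrow> bool" where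
  "atomic_in A a \<longleftrightarrow> (\<exists>xs. xs \<noteq> [] \<and> (\<forall>p\<in>set xs. irreducible_in A p) \<and> a = prod_list xs)"

end

theory Submission
  imports Defs
begin

definition tri :: "nat \<Rightarrow> nat \<Rightarrow> rat" where
  "tri m N = 2 * of_nat m / 3 ^ N"

lemma tri_add: "tri m1 N1 + tri m2 N2 = tri (m1 * 3 ^ N2 + m2 * 3 ^ N1) (N1 + N2)"
  by (simp add: tri_def field_simps power_add)

lemma tri_ne1: "tri m N \<noteq> 1"
proof
  assume "tri m N = 1"
  hence "(of_nat (2 * m) :: rat) = of_nat (3 ^ N)" by (simp add: tri_def field_simps)
  hence "2 * m = 3 ^ N" using of_nat_eq_iff by blast
  moreover have "odd ((3::nat) ^ N)" by simp
  ultimately show False by (metis dvd_triv_left)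
qed

lemma tri_nonneg: "tri m N \<ge> 0" by (simp add: tri_def)

lemma nat_in_M: "(of_nat n :: rat) \<in> M"
proof (induction n)
  case 0 then show ?case by (simp add: M.zero)
next
  case (Suc n)
  have "(1::rat) \<in> M" by (rule M.gen) (simp add: gens_def)
  with Suc show ?case using M.add by fastforce
qed

lemma tri_in_M: "tri m N \<in> M"
proof (cases N)
  case 0
  then have "tri m N = of_nat (2*m)" by (simp add: tri_def)
  then show ?thesis using nat_in_M by metis
next
  case (Suc K)
  have g: "2 / 3 ^ N \<in> M"
    by (rule M.gen, unfold gens_def, rule UnI2, rule CollectI, rule exI[of _ N]) (simp add: Suc)
  show ?thesis
  proof (induction m)
    case 0 then show ?case by (simp add: tri_def M.zero)
  next
    case (Suc m)
    have "tri (Suc m) N = tri m N + 2 / 3 ^ N" by (simp add: tri_def field_simps)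
    then show ?case using Suc g M.add by simp
  qed
qed

lemma M_char: "q \<in> M \<longleftrightarrow> (\<exists>a m N. q = of_nat a + tri m N)"
proof
  assume "q \<in> M"
  then show "\<exists>a m N. q = of_nat a + tri m N"
  proof (induction rule: M.induct)
    case zero
    then show ?case by (rule exI[of _ 0], rule exI[of _ 0], rule exI[of _ 0]) (simp add: tri_def)
  next
    case (gen g)
    then show ?case
    proof (cases "g = 1")
      case True
      then show ?thesis by (intro exI[of _ 1] exI[of _ 0]) (simp add: tri_def)
    next
      case False
      with gen obtain n where "g = 2 / 3 ^ n" by (auto simp: gens_def)
      then show ?thesis by (intro exI[of _ 0] exI[of _ 1] exI[of _ n]) (simp add: tri_def)
    qed
  next
    case (add a b)
    then obtain a1 m1 N1 a2 m2 N2 where "a = of_nat a1 + tri m1 N1" "b = of_nat a2 + tri m2 N2"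
      by blast
    then have "a + b = of_nat (a1 + a2) + tri (m1 * 3 ^ N2 + m2 * 3 ^ N1) (N1 + N2)"
      by (simp add: tri_add[symmetric])
    then show ?case by blast
  qed
next
  assume "\<exists>a m N. q = of_nat a + tri m N"
  then show "q \<in> M" using nat_in_M tri_in_M M.add by blast
qed

lemma M_nonneg: "q \<in> M \<Longrightarrow> q \<ge> 0"
  using M_char tri_nonneg by fastforce

lemma one_in_M: "(1::rat) \<in> M" by (rule M.gen) (simp add: gens_def)

lemma one_atom: "atom_of M 1"
  unfolding atom_of_def
proof (intro conjI one_in_M)
  show "(1::rat) \<noteq> 0" by simp
next
  show "\<not> (\<exists>b\<in>M. \<exists>c\<in>M. b \<noteq> 0 \<and> c \<noteq> 0 \<and> (1::rat) = b + c)"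
  proof
  assume "\<exists>b\<in>M. \<exists>c\<in>M. b \<noteq> 0 \<and> c \<noteq> 0 \<and> (1::rat) = b + c"
  then obtain b c where bc: "b \<in> M" "c \<in> M" "b \<noteq> 0" "c \<noteq> 0" "1 = b + c" by blast
  obtain a1 m1 N1 where b: "b = of_nat a1 + tri m1 N1" using bc M_char by blast
  obtain a2 m2 N2 where c: "c = of_nat a2 + tri m2 N2" using bc M_char by blast
  have bn: "b \<ge> 0" "c \<ge> 0" using bc M_nonneg by auto
  have "a1 = 0"
  proof (rule ccontr)
    assume "a1 \<noteq> 0"
    then have "(of_nat a1::rat) \<ge> 1" by simp
    then have "b \<ge> 1" using b tri_nonneg[of m1 N1] by linarith
    then have "c \<le> 0" using bc by simp
    then show False using bn bc by simp
  qed
  moreover have "a2 = 0"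
  proof (rule ccontr)
    assume "a2 \<noteq> 0"
    then have "(of_nat a2::rat) \<ge> 1" by simp
    then have "c \<ge> 1" using c tri_nonneg[of m2 N2] by linarith
    then have "b \<le> 0" using bc by simp
    then show False using bn bc by simp
  qed
  ultimately have "1 = tri m1 N1 + tri m2 N2" using b c bc by simp
  then show False using tri_ne1 tri_add by metis
  qed
qed

lemma not_atom: assumes "q \<in> M" "q \<noteq> 0" "q \<noteq> 1" shows "\<not> atom_of M q"
proof -
  obtain a m N where q: "q = of_nat a + tri m N" using assms M_char by blast
  show ?thesis
  proof (cases a)
    case 0
    then have "m \<noteq> 0" using q assms by (auto simp: tri_def)
    have "q = tri m (N+1) + tri (2*m) (N+1)" using q 0 by (simp add: tri_def field_simps)
    moreover have "tri m (N+1) \<noteq> 0" "tri (2*m) (N+1) \<noteq> 0" using \<open>m \<noteq> 0\<close> by (auto simp: tri_def)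
    ultimately show ?thesis unfolding atom_of_def using tri_in_M by blast
  next
    case (Suc a')
    have "q = 1 + (of_nat a' + tri m N)" using q Suc by simp
    moreover have "of_nat a' + tri m N \<in> M" using M_char by blast
    moreover have "of_nat a' + tri m N \<noteq> 0" using assms calculation by auto
    ultimately show ?thesis unfolding atom_of_def using one_in_M by fastforce
  qed
qed

lemma atoms: "{a. atom_of M a} = {1}"
proof (rule set_eqI)
  fix a show "a \<in> {a. atom_of M a} \<longleftrightarrow> a \<in> {1}"
  proof (cases "a = 1")
    case True then show ?thesis using one_atom by simp
  next
    case False then show ?thesis using not_atom[of a] atom_of_def by blast
  qed
qed

definition hi :: "(rat \<Rightarrow>\<^sub>0 'k::field) \<Rightarrow> rat" where "hi f = Max (Poly_Mapping.keys f)"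
definition lo :: "(rat \<Rightarrow>\<^sub>0 'k::field) \<Rightarrow> rat" where "lo f = Min (Poly_Mapping.keys f)"

lemma hi_in: "f \<noteq> 0 \<Longrightarrow> hi f \<in> Poly_Mapping.keys f" by (simp add: hi_def)
lemma lo_in: "f \<noteq> 0 \<Longrightarrow> lo f \<in> Poly_Mapping.keys f" by (simp add: lo_def)
lemma hi_ge: "k \<in> Poly_Mapping.keys f \<Longrightarrow> k \<le> hi f" by (simp add: hi_def)
lemma lo_le: "k \<in> Poly_Mapping.keys f \<Longrightarrow> lo f \<le> k" by (simp add: lo_def)
lemma lo_le_hi: "f \<noteq> 0 \<Longrightarrow> lo f \<le> hi f" using lo_in lo_le hi_ge by (meson order_trans lo_in)

lemma keys_mult_zero:
  fixes f g :: "rat \<Rightarrow>\<^sub>0 'k::field"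
  assumes "\<forall>x\<in>Poly_Mapping.keys f. \<forall>y\<in>Poly_Mapping.keys g. x + y \<noteq> c"
  shows "Poly_Mapping.lookup (f * g) c = 0"
proof -
  have "c \<notin> Poly_Mapping.keys (f * g)" using keys_mult[of f g] assms by blast
  then show ?thesis by (simp add: in_keys_iff)
qed

lemma split_top:
  fixes f :: "rat \<Rightarrow>\<^sub>0 'k::field"
  shows "f = Poly_Mapping.single a (Poly_Mapping.lookup f a) + (f - Poly_Mapping.single a (Poly_Mapping.lookup f a))"
    "k \<in> Poly_Mapping.keys (f - Poly_Mapping.single a (Poly_Mapping.lookup f a)) \<Longrightarrow> k \<in> Poly_Mapping.keys f \<and> k \<noteq> a"
  by (auto simp: in_keys_iff lookup_minus lookup_single when_def split: if_splits)

lemma top_mult: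
  fixes f g :: "rat \<Rightarrow>\<^sub>0 'k::field"
  assumes A: "\<forall>k\<in>Poly_Mapping.keys f. k \<le> a" and B: "\<forall>k\<in>Poly_Mapping.keys g. k \<le> b"
  shows "Poly_Mapping.lookup (f * g) (a + b) = Poly_Mapping.lookup f a * Poly_Mapping.lookup g b"
proof -
  define c where "c = Poly_Mapping.lookup f a"
  define d where "d = Poly_Mapping.lookup g b"
  define f' where "f' = f - Poly_Mapping.single a c"
  define g' where "g' = g - Poly_Mapping.single b d"
  have f: "f = Poly_Mapping.single a c + f'" unfolding f'_def by simp
  have g: "g = Poly_Mapping.single b d + g'" unfolding g'_def by simp
  have kf: "k < a" if "k \<in> Poly_Mapping.keys f'" for k
  proof -
    have "k \<in> Poly_Mapping.keys f \<and> k \<noteq> a" using split_top(2)[of k f a] that unfolding f'_def c_def .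
    then show ?thesis using A by force
  qed
  have kg: "k < b" if "k \<in> Poly_Mapping.keys g'" for k
  proof -
    have "k \<in> Poly_Mapping.keys g \<and> k \<noteq> b" using split_top(2)[of k g b] that unfolding g'_def d_def .
    then show ?thesis using B by force
  qed
  have ks1: "k = a" if "k \<in> Poly_Mapping.keys (Poly_Mapping.single a c)" for k
    using that by (simp split: if_splits)
  have ks2: "k = b" if "k \<in> Poly_Mapping.keys (Poly_Mapping.single b d)" for k
    using that by (simp split: if_splits)
  have z1: "Poly_Mapping.lookup (Poly_Mapping.single a c * g') (a + b) = 0"
    by (rule keys_mult_zero) (auto dest!: ks1 kg)
  have z2: "Poly_Mapping.lookup (f' * Poly_Mapping.single b d) (a + b) = 0"
    by (rule keys_mult_zero) (auto dest!: ks2 kf)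
  have z3: "Poly_Mapping.lookup (f' * g') (a + b) = 0"
  proof (rule keys_mult_zero, intro ballI)
    fix x y assume "x \<in> Poly_Mapping.keys f'" "y \<in> Poly_Mapping.keys g'"
    then have "x < a" "y < b" using kf kg by blast+
    then have "x + y < a + b" by (rule add_strict_mono)
    then show "x + y \<noteq> a + b" by simp
  qed
  have "f * g = (Poly_Mapping.single a c + f') * (Poly_Mapping.single b d + g')"
    using f g by (rule arg_cong2)
  also have "\<dots> = Poly_Mapping.single a c * Poly_Mapping.single b d + Poly_Mapping.single a c * g'
      + f' * Poly_Mapping.single b d + f' * g'"
    by (simp add: algebra_simps)
  finally have "Poly_Mapping.lookup (f * g) (a + b) = c * d" using z1 z2 z3 by (simp add: lookup_add mult_single)
  then show ?thesis by (simp add: c_def d_def)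
qed

lemma bot_mult:
  fixes f g :: "rat \<Rightarrow>\<^sub>0 'k::field"
  assumes A: "\<forall>k\<in>Poly_Mapping.keys f. a \<le> k" and B: "\<forall>k\<in>Poly_Mapping.keys g. b \<le> k"
  shows "Poly_Mapping.lookup (f * g) (a + b) = Poly_Mapping.lookup f a * Poly_Mapping.lookup g b"
proof -
  define c where "c = Poly_Mapping.lookup f a"
  define d where "d = Poly_Mapping.lookup g b"
  define f' where "f' = f - Poly_Mapping.single a c"
  define g' where "g' = g - Poly_Mapping.single b d"
  have f: "f = Poly_Mapping.single a c + f'" unfolding f'_def by simp
  have g: "g = Poly_Mapping.single b d + g'" unfolding g'_def by simp
  have kf: "a < k" if "k \<in> Poly_Mapping.keys f'" for k
  proof -
    have "k \<in> Poly_Mapping.keys f \<and> k \<noteq> a" using split_top(2)[of k f a] that unfolding f'_def c_def .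
    then show ?thesis using A by force
  qed
  have kg: "b < k" if "k \<in> Poly_Mapping.keys g'" for k
  proof -
    have "k \<in> Poly_Mapping.keys g \<and> k \<noteq> b" using split_top(2)[of k g b] that unfolding g'_def d_def .
    then show ?thesis using B by force
  qed
  have ks1: "k = a" if "k \<in> Poly_Mapping.keys (Poly_Mapping.single a c)" for k
    using that by (simp split: if_splits)
  have ks2: "k = b" if "k \<in> Poly_Mapping.keys (Poly_Mapping.single b d)" for k
    using that by (simp split: if_splits)
  have z1: "Poly_Mapping.lookup (Poly_Mapping.single a c * g') (a + b) = 0"
    by (rule keys_mult_zero) (auto dest!: ks1 kg)
  have z2: "Poly_Mapping.lookup (f' * Poly_Mapping.single b d) (a + b) = 0"
    by (rule keys_mult_zero) (auto dest!: ks2 kf)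
  have z3: "Poly_Mapping.lookup (f' * g') (a + b) = 0"
  proof (rule keys_mult_zero, intro ballI)
    fix x y assume "x \<in> Poly_Mapping.keys f'" "y \<in> Poly_Mapping.keys g'"
    then have "a < x" "b < y" using kf kg by blast+
    then have "a + b < x + y" by (rule add_strict_mono)
    then show "x + y \<noteq> a + b" by simp
  qed
  have "f * g = (Poly_Mapping.single a c + f') * (Poly_Mapping.single b d + g')"
    using f g by (rule arg_cong2)
  also have "\<dots> = Poly_Mapping.single a c * Poly_Mapping.single b d + Poly_Mapping.single a c * g'
      + f' * Poly_Mapping.single b d + f' * g'"
    by (simp add: algebra_simps)
  finally have "Poly_Mapping.lookup (f * g) (a + b) = c * d" using z1 z2 z3 by (simp add: lookup_add mult_single)
  then show ?thesis by (simp add: c_def d_def)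
qed

lemma hi_lo_mult:
  fixes f g :: "rat \<Rightarrow>\<^sub>0 'k::field"
  assumes "f \<noteq> 0" "g \<noteq> 0"
  shows "f * g \<noteq> 0" "hi (f * g) = hi f + hi g" "lo (f * g) = lo f + lo g"
proof -
  have t0: "Poly_Mapping.lookup (f * g) (hi f + hi g) = Poly_Mapping.lookup f (hi f) * Poly_Mapping.lookup g (hi g)"
    by (rule top_mult) (use hi_ge in blast)+
  have "Poly_Mapping.lookup f (hi f) \<noteq> 0" "Poly_Mapping.lookup g (hi g) \<noteq> 0"
    using hi_in assms in_keys_iff by metis+
  then have t: "Poly_Mapping.lookup (f * g) (hi f + hi g) \<noteq> 0" using t0 by simp
  have b0: "Poly_Mapping.lookup (f * g) (lo f + lo g) = Poly_Mapping.lookup f (lo f) * Poly_Mapping.lookup g (lo g)"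
    by (rule bot_mult) (use lo_le in blast)+
  have "Poly_Mapping.lookup f (lo f) \<noteq> 0" "Poly_Mapping.lookup g (lo g) \<noteq> 0"
    using lo_in assms in_keys_iff by metis+
  then have b: "Poly_Mapping.lookup (f * g) (lo f + lo g) \<noteq> 0" using b0 by simp
  show nz: "f * g \<noteq> 0" using t by auto
  have up: "\<forall>k\<in>Poly_Mapping.keys (f*g). k \<le> hi f + hi g"
    using keys_mult[of f g] hi_ge by (fastforce intro: add_mono)
  have dn: "\<forall>k\<in>Poly_Mapping.keys (f*g). lo f + lo g \<le> k"
    using keys_mult[of f g] lo_le by (fastforce intro: add_mono)
  show "hi (f * g) = hi f + hi g"
    using up t hi_in[OF nz] hi_ge[of "hi f + hi g" "f*g"] in_keys_iff by (metis order_antisym)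
  show "lo (f * g) = lo f + lo g"
    using dn b lo_in[OF nz] lo_le[of "lo f + lo g" "f*g"] in_keys_iff by (metis order_antisym)
qed

lemma hi_single[simp]: "c \<noteq> 0 \<Longrightarrow> hi (Poly_Mapping.single q c) = q" by (simp add: hi_def)
lemma lo_single[simp]: "c \<noteq> 0 \<Longrightarrow> lo (Poly_Mapping.single q c) = q" by (simp add: lo_def)

lemma monomial:
  fixes f :: "rat \<Rightarrow>\<^sub>0 'k::field"
  assumes "f \<noteq> 0" "lo f = hi f"
  shows "f = Poly_Mapping.single (hi f) (Poly_Mapping.lookup f (hi f))"
proof (rule poly_mapping_eqI)
  fix k
  show "Poly_Mapping.lookup f k = Poly_Mapping.lookup (Poly_Mapping.single (hi f) (Poly_Mapping.lookup f (hi f))) k"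
  proof (cases "k = hi f")
    case False
    then have "k \<notin> Poly_Mapping.keys f" using hi_ge lo_le assms by (metis order_antisym)
    then show ?thesis using False by (simp add: in_keys_iff lookup_single)
  qed simp
qed

lemma single_in_R: "q \<in> M \<Longrightarrow> Poly_Mapping.single q c \<in> R" by (simp add: R_def)

lemma R_nonneg: "f \<in> R \<Longrightarrow> f \<noteq> 0 \<Longrightarrow> hi f \<ge> 0"
  using hi_in M_nonneg by (auto simp: R_def)

lemma unit_hi: assumes "unit_in R (u :: rat \<Rightarrow>\<^sub>0 'k::field)" shows "u \<noteq> 0 \<and> hi u = 0"
proof -
  obtain v where v: "v \<in> R" "u * v = 1" "u \<in> R" using assms by (auto simp: unit_in_def)
  have "u \<noteq> 0" "v \<noteq> 0" using v by auto
  then have "hi u + hi v = hi (1 :: rat \<Rightarrow>\<^sub>0 'k)" using hi_lo_mult v by metis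
  also have "\<dots> = 0" by (simp flip: single_one)
  finally have "hi u + hi v = 0" .
  moreover have "hi u \<ge> 0" "hi v \<ge> 0" using R_nonneg v \<open>u \<noteq> 0\<close> \<open>v \<noteq> 0\<close> by auto
  ultimately show ?thesis using \<open>u \<noteq> 0\<close> by linarith
qed

lemma const_unit: "c \<noteq> 0 \<Longrightarrow> unit_in R (Poly_Mapping.single 0 c :: rat \<Rightarrow>\<^sub>0 'k::field)"
  unfolding unit_in_def
  by (intro conjI bexI[of _ "Poly_Mapping.single 0 (inverse c)"] single_in_R M.zero)
     (simp_all add: mult_single flip: single_one)

lemma irr_monomial:
  fixes p :: "rat \<Rightarrow>\<^sub>0 'k::field"
  assumes irr: "irreducible_in R p" and eq: "lo p = hi p"
  shows "hi p = 1"
proof (rule ccontr)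
  assume ne: "hi p \<noteq> 1"
  have p0: "p \<noteq> 0" "p \<in> R" using irr by (auto simp: irreducible_in_def)
  define c where "c = Poly_Mapping.lookup p (hi p)"
  have c0: "c \<noteq> 0" using hi_in[OF p0(1)] by (simp add: c_def in_keys_iff)
  have pe: "p = Poly_Mapping.single (hi p) c" using monomial p0 eq c_def by blast
  have qM: "hi p \<in> M" using hi_in p0 by (auto simp: R_def)
  show False
  proof (cases "hi p = 0")
    case True
    then show ?thesis using irr pe const_unit[OF c0] by (auto simp: irreducible_in_def)
  next
    case False
    then have "\<not> atom_of M (hi p)" using not_atom qM ne by blast
    then obtain b d where bd: "b \<in> M" "d \<in> M" "b \<noteq> 0" "d \<noteq> 0" "hi p = b + d"
      using qM False by (auto simp: atom_of_def)
    have "p = Poly_Mapping.single b c * Poly_Mapping.single d 1" using pe bd by (simp add: mult_single)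
    moreover have "\<not> unit_in R (Poly_Mapping.single b c :: rat \<Rightarrow>\<^sub>0 'k)" using unit_hi c0 bd by fastforce
    moreover have "\<not> unit_in R (Poly_Mapping.single d 1 :: rat \<Rightarrow>\<^sub>0 'k)" using unit_hi bd by fastforce
    ultimately show False using irr single_in_R bd unfolding irreducible_in_def by blast
  qed
qed

lemma prod_list_hi_lo:
  fixes xs :: "(rat \<Rightarrow>\<^sub>0 'k::field) list"
  assumes "\<forall>p\<in>set xs. p \<noteq> 0"
  shows "prod_list xs \<noteq> 0 \<and> hi (prod_list xs) = sum_list (map hi xs)
         \<and> lo (prod_list xs) = sum_list (map lo xs)"
  using assms
proof (induction xs)
  case Nil
  have "Poly_Mapping.single 0 (1::'k) \<noteq> 0" by (metis single_one one_neq_zero)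
  then show ?case by (simp flip: single_one)
next
  case (Cons p xs)
  then show ?case using hi_lo_mult[of p "prod_list xs"] by simp
qed

lemma sum_list_eq_pointwise:
  fixes f g :: "'a \<Rightarrow> rat"
  shows "\<forall>x\<in>set xs. f x \<le> g x \<Longrightarrow> sum_list (map f xs) = sum_list (map g xs) \<Longrightarrow> \<forall>x\<in>set xs. f x = g x"
proof (induction xs)
  case Nil then show ?case by simp
next
  case (Cons a xs)
  have le: "\<forall>x\<in>set xs. f x \<le> g x" "f a \<le> g a" using Cons.prems(1) by (meson list.set_intros)+
  have s: "sum_list (map f xs) \<le> sum_list (map g xs)"
    by (rule sum_list_mono) (use le(1) in blast)
  have e: "f a + sum_list (map f xs) = g a + sum_list (map g xs)" using Cons.prems(2) by (metis list.map(2) sum_list.Cons)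
  have "f a = g a" using s e le(2) by linarith
  moreover have "sum_list (map f xs) = sum_list (map g xs)" using s e le(2) by linarith
  moreover have "\<forall>x\<in>set xs. f x = g x" using Cons.IH le(1) calculation(2) by blast
  ultimately show ?case by (metis set_ConsD)
qed

lemma sum_list_const1: "sum_list (map f xs) = (of_nat (length xs) :: rat)" if "\<forall>x\<in>set xs. f x = 1"
  using that by (induction xs) auto

lemma single_ne0: "(c::'k::field) \<noteq> 0 \<Longrightarrow> Poly_Mapping.single (q::rat) c \<noteq> 0"
proof
  assume "c \<noteq> 0" "Poly_Mapping.single q c = 0"
  then have "Poly_Mapping.keys (Poly_Mapping.single q c) = {}" by simp
  then show False using \<open>c \<noteq> 0\<close> by simp
qed

lemma xpow_ne0[simp]: "xpow q \<noteq> (0 :: rat \<Rightarrow>\<^sub>0 'k::field)" by (simp add: xpow_def single_ne0)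
lemma hi_xpow[simp]: "hi (xpow q :: rat \<Rightarrow>\<^sub>0 'k::field) = q" by (simp add: xpow_def)
lemma lo_xpow[simp]: "lo (xpow q :: rat \<Rightarrow>\<^sub>0 'k::field) = q" by (simp add: xpow_def)

lemma not_atomic:
  assumes "\<not> (\<exists>n. q = of_nat n)"
  shows "\<not> atomic_in (R :: (rat \<Rightarrow>\<^sub>0 'k::field) set) (xpow q)"
proof
  assume "atomic_in (R :: (rat \<Rightarrow>\<^sub>0 'k::field) set) (xpow q)"
  then obtain xs :: "(rat \<Rightarrow>\<^sub>0 'k) list" where xs: "xs \<noteq> []" "\<forall>p\<in>set xs. irreducible_in R p"
    "xpow q = prod_list xs" by (auto simp: atomic_in_def)
  have nz: "\<forall>p\<in>set xs. p \<noteq> 0" using xs by (auto simp: irreducible_in_def)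
  have pl: "hi (prod_list xs) = sum_list (map hi xs)" "lo (prod_list xs) = sum_list (map lo xs)"
    using prod_list_hi_lo[OF nz] by blast+
  have h: "sum_list (map hi xs) = q" "sum_list (map lo xs) = q"
    using pl unfolding xs(3)[symmetric] by simp_all
  have "\<forall>p\<in>set xs. lo p = hi p"
  proof (rule sum_list_eq_pointwise)
    show "\<forall>p\<in>set xs. lo p \<le> hi p" using nz lo_le_hi by blast
    show "sum_list (map lo xs) = sum_list (map hi xs)" using h by simp
  qed
  then have "\<forall>p\<in>set xs. hi p = 1" using irr_monomial xs(2) by blast
  then have "sum_list (map hi xs) = of_nat (length xs)" by (rule sum_list_const1)
  then have "q = of_nat (length xs)" using h by simp
  then show False using assms by blast
qed

lemma xpow_nonunit: "q \<noteq> 0 \<Longrightarrow> \<not> unit_in R (xpow q :: rat \<Rightarrow>\<^sub>0 'k::field)"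
  using unit_hi by fastforce

lemma xpow_R: "q \<in> M \<Longrightarrow> xpow q \<in> R" by (simp add: xpow_def single_in_R)

lemma xpow_mult: "xpow a * xpow b = (xpow (a + b) :: rat \<Rightarrow>\<^sub>0 'k::field)"
  by (simp add: xpow_def mult_single)

lemma irr_x: "irreducible_in (R :: (rat \<Rightarrow>\<^sub>0 'k::field) set) (xpow 1)"
  unfolding irreducible_in_def
proof (intro conjI ballI impI)
  show "xpow 1 \<in> (R :: (rat \<Rightarrow>\<^sub>0 'k::field) set)" using xpow_R one_in_M by blast
  show "xpow 1 \<noteq> (0 :: rat \<Rightarrow>\<^sub>0 'k)" by simp
  show "\<not> unit_in R (xpow 1 :: rat \<Rightarrow>\<^sub>0 'k)" by (rule xpow_nonunit) simp
next
  fix a b :: "rat \<Rightarrow>\<^sub>0 'k"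
  assume ab: "a \<in> R" "b \<in> R" "xpow 1 = a * b"
  then have nz: "a \<noteq> 0" "b \<noteq> 0" by (metis mult_zero_left mult_zero_right xpow_ne0)+
  have e: "hi a + hi b = 1" "lo a + lo b = 1" using hi_lo_mult[OF nz] ab by (metis hi_xpow lo_xpow)+
  have "lo a \<le> hi a" "lo b \<le> hi b" using lo_le_hi nz by auto
  then have "lo a = hi a" "lo b = hi b" using e by linarith+
  then have ma: "a = Poly_Mapping.single (hi a) (Poly_Mapping.lookup a (hi a))" and mb: "b = Poly_Mapping.single (hi b) (Poly_Mapping.lookup b (hi b))"
    using monomial nz by blast+
  have ca: "Poly_Mapping.lookup a (hi a) \<noteq> 0" "Poly_Mapping.lookup b (hi b) \<noteq> 0" using hi_in nz by (auto simp: in_keys_iff)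
  have "hi a \<in> M" "hi b \<in> M" using ab hi_in nz by (auto simp: R_def)
  then have "hi a = 0 \<or> hi b = 0" using one_atom e unfolding atom_of_def by auto
  then show "unit_in R a \<or> unit_in R b" using ma mb const_unit ca by metis
qed

theorem mainTheorem4:
  shows "{a. atom_of M a} = {1}
    \<and> irreducible_in (R :: (rat \<Rightarrow>\<^sub>0 'k::field) set) (xpow 1)
    \<and> \<not> atomic_in (R :: (rat \<Rightarrow>\<^sub>0 'k::field) set) (xpow (2/3))
    \<and> (xpow 1 * xpow 1 :: rat \<Rightarrow>\<^sub>0 'k::field) = xpow (2/3) ^ 3
    \<and> \<not> (\<forall>a\<in>{f \<in> (R :: (rat \<Rightarrow>\<^sub>0 'k::field) set). f \<noteq> 0 \<and> \<not> unit_in R f \<and> \<not> atomic_in R f}.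
           \<forall>b\<in>{f \<in> (R :: (rat \<Rightarrow>\<^sub>0 'k::field) set). f \<noteq> 0 \<and> \<not> unit_in R f \<and> \<not> atomic_in R f}.
             a * b \<in> {f \<in> R. f \<noteq> 0 \<and> \<not> unit_in R f \<and> \<not> atomic_in R f})"
proof -
  have n23: "\<not> (\<exists>n. (2/3::rat) = of_nat n)"
  proof
    assume "\<exists>n. (2/3::rat) = of_nat n"
    then obtain n where "(2/3::rat) = of_nat n" by blast
    then have "(of_nat 2 :: rat) = of_nat (3 * n)" by (simp add: field_simps)
    then have "2 = 3 * n" using of_nat_eq_iff by blast
    then show False by presburger
  qed
  have n43: "\<not> (\<exists>n. (4/3::rat) = of_nat n)"
  proof
    assume "\<exists>n. (4/3::rat) = of_nat n"
    then obtain n where "(4/3::rat) = of_nat n" by blast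
    then have "(of_nat 4 :: rat) = of_nat (3 * n)" by (simp add: field_simps)
    then have "4 = 3 * n" using of_nat_eq_iff by blast
    then show False by presburger
  qed
  have m23: "(2/3::rat) \<in> M" by (rule M.gen) (auto simp: gens_def intro: exI[of _ 1])
  have m43: "(4/3::rat) \<in> M" using M.add[OF m23 m23] by simp
  have pw: "(xpow 1 * xpow 1 :: rat \<Rightarrow>\<^sub>0 'k::field) = xpow (2/3) ^ 3"
    by (simp add: power3_eq_cube xpow_mult)
  define S where "S = {f \<in> (R :: (rat \<Rightarrow>\<^sub>0 'k::field) set). f \<noteq> 0 \<and> \<not> unit_in R f \<and> \<not> atomic_in R f}"
  have a: "(xpow (2/3) :: rat \<Rightarrow>\<^sub>0 'k) \<in> S" unfolding S_def
  proof (intro CollectI conjI)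
    show "xpow (2/3) \<in> (R :: (rat \<Rightarrow>\<^sub>0 'k::field) set)" using m23 by (rule xpow_R)
    show "xpow (2/3) \<noteq> (0 :: rat \<Rightarrow>\<^sub>0 'k::field)" by simp
    show "\<not> unit_in R (xpow (2/3) :: rat \<Rightarrow>\<^sub>0 'k::field)" by (rule xpow_nonunit) simp
    show "\<not> atomic_in R (xpow (2/3) :: rat \<Rightarrow>\<^sub>0 'k::field)" by (rule not_atomic[OF n23])
  qed
  have b: "(xpow (4/3) :: rat \<Rightarrow>\<^sub>0 'k) \<in> S" unfolding S_def
  proof (intro CollectI conjI)
    show "xpow (4/3) \<in> (R :: (rat \<Rightarrow>\<^sub>0 'k::field) set)" using m43 by (rule xpow_R)
    show "xpow (4/3) \<noteq> (0 :: rat \<Rightarrow>\<^sub>0 'k::field)" by simp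
    show "\<not> unit_in R (xpow (4/3) :: rat \<Rightarrow>\<^sub>0 'k::field)" by (rule xpow_nonunit) simp
    show "\<not> atomic_in R (xpow (4/3) :: rat \<Rightarrow>\<^sub>0 'k::field)" by (rule not_atomic[OF n43])
  qed
  have "xpow (2/3) * xpow (4/3) = (prod_list [xpow 1, xpow 1] :: rat \<Rightarrow>\<^sub>0 'k)"
    by (simp add: xpow_mult)
  then have "atomic_in R (xpow (2/3) * xpow (4/3) :: rat \<Rightarrow>\<^sub>0 'k)"
    unfolding atomic_in_def using irr_x by (metis empty_iff list.distinct(1) set_ConsD set_empty)
  then have "xpow (2/3) * xpow (4/3) \<notin> S" by (simp add: S_def)
  then have last: "\<not> (\<forall>a\<in>S. \<forall>b\<in>S. a * b \<in> S)" using a b by blast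
  show ?thesis using atoms irr_x not_atomic[OF n23] pw last unfolding S_def by blast
qed

end
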